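(* Let $n\ge 2$ and $q=e^{2\pi i/6}$. The multiplicative group $G_n\subset Q_n^\times$ generated by $s_1,\dots,s_{n-1}$ is finite.
   Context: $Q_n$ is the $\mathbb{C}$-algebra with generators $u_1,v_1,\dots,u_{n-1},v_{n-1}$ and relations (G1) $u_i^2=v_i^2=-1$; (G2) $[u_i,v_j]=-1$ if $|i-j|\le1$ (including $i=j$); (G3) $[u_i,v_j]=1$ if $|i-j|\ge2$; (G4) $[u_i,u_j]=[v_i,v_j]=1$, with $[a,b]=aba^{-1}b^{-1}$. $s_i=\frac{-1}{2q}(1+u_i+v_i+u_iv_i)$ for $1\le i\le n-1$. *)

theory Defs
  imports Complex_Main
begin

text \<open>A complex algebra structure on a ring: a unital ring homomorphism from the
complex numbers into the centre of the ring (scalars act by multiplication by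
their image).\<close>
definition complex_alg_emb :: "(complex \<Rightarrow> 'a::ring_1) \<Rightarrow> bool" where
  "complex_alg_emb \<phi> \<longleftrightarrow>
     \<phi> 1 = 1 \<and> (\<forall>x y. \<phi> (x + y) = \<phi> x + \<phi> y) \<and> (\<forall>x y. \<phi> (x * y) = \<phi> x * \<phi> y)
     \<and> (\<forall>z a. \<phi> z * a = a * \<phi> z)"

text \<open>Since u_i^2 = v_i^2 = -1, every generator is a unit with inverse its negative, so
a commutator relation [a,b] = 1 means a*b = b*a and [a,b] = -1 means a*b = -(b*a).\<close>
definition Q_relations :: "nat \<Rightarrow> (nat \<Rightarrow> 'a::ring_1) \<Rightarrow> (nat \<Rightarrow> 'a) \<Rightarrow> bool" where
  "Q_relations n u v \<longleftrightarrow>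
     (\<forall>i\<in>{1..<n}. u i * u i = -1 \<and> v i * v i = -1) \<and>
     (\<forall>i\<in>{1..<n}. \<forall>j\<in>{1..<n}.
        (if (i \<le> j + 1 \<and> j \<le> i + 1) then u i * v j = - (v j * u i) else u i * v j = v j * u i)) \<and>
     (\<forall>i\<in>{1..<n}. \<forall>j\<in>{1..<n}. u i * u j = u j * u i \<and> v i * v j = v j * v i)"

definition s_elt :: "(complex \<Rightarrow> 'a::ring_1) \<Rightarrow> complex \<Rightarrow> (nat \<Rightarrow> 'a) \<Rightarrow> (nat \<Rightarrow> 'a) \<Rightarrow> nat \<Rightarrow> 'a" where
  "s_elt \<phi> q u v i = \<phi> (- 1 / (2 * q)) * (1 + u i + v i + u i * v i)"

inductive_set gen_group :: "'a::ring_1 set \<Rightarrow> 'a set" for S where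
  one: "1 \<in> gen_group S"
| mult: "g \<in> gen_group S \<Longrightarrow> s \<in> S \<Longrightarrow> s * g \<in> gen_group S"
| inv: "g \<in> gen_group S \<Longrightarrow> s \<in> S \<Longrightarrow> t * s = 1 \<Longrightarrow> s * t = 1 \<Longrightarrow> t * g \<in> gen_group S"

end

theory Submission
  imports Defs
begin


definition adj :: "nat \<Rightarrow> nat \<Rightarrow> bool" where
  "adj i j \<longleftrightarrow> i \<le> j + 1 \<and> j \<le> i + 1"

definition kk :: "nat set \<Rightarrow> nat \<Rightarrow> nat" where
  "kk A j = card {i\<in>A. adj i j}"

locale QS =
  fixes n :: nat and \<phi> :: "complex \<Rightarrow> 'a::ring_1" and u v :: "nat \<Rightarrow> 'a"
  assumes emb: "complex_alg_emb \<phi>" and rel: "Q_relations n u v"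
begin

lemma phi1[simp]: "\<phi> 1 = 1" using emb unfolding complex_alg_emb_def by blast
lemma phi_add[simp]: "\<phi> (x + y) = \<phi> x + \<phi> y" using emb unfolding complex_alg_emb_def by blast
lemma phi_mult[simp]: "\<phi> (x * y) = \<phi> x * \<phi> y" using emb unfolding complex_alg_emb_def by blast
lemma phi_central: "\<phi> z * a = a * \<phi> z" using emb unfolding complex_alg_emb_def by blast
lemma phi0[simp]: "\<phi> 0 = 0"
proof -
  have "\<phi> 0 + \<phi> 0 = \<phi> 0 + 0" using phi_add[of 0 0] by (simp only: add_0_right)
  thus ?thesis by (simp only: add_left_cancel)
qed
lemma phi_neg[simp]: "\<phi> (- x) = - \<phi> x"
proof -
  have "\<phi> x + \<phi> (- x) = \<phi> x + (- \<phi> x)" using phi_add[of x "-x"] by (simp only: right_minus phi0)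
  thus ?thesis by (simp only: add_left_cancel)
qed
lemma phi_diff[simp]: "\<phi> (x - y) = \<phi> x - \<phi> y"
  by (simp only: diff_conv_add_uminus phi_add phi_neg)
lemma phi_of_nat[simp]: "\<phi> (of_nat k) = of_nat k"
  by (induction k) auto
lemma phi_numeral[simp]: "\<phi> (numeral k) = numeral k"
  using phi_of_nat[of "numeral k"] by simp
lemma phi_inv_cancel: "c \<noteq> 0 \<Longrightarrow> \<phi> (1/c) * \<phi> c = 1"
  by (simp only: phi_mult[symmetric]) simp

abbreviation "R \<equiv> {1..<n}"

lemma uu: "i \<in> R \<Longrightarrow> u i * u i = -1" using rel by (simp add: Q_relations_def)
lemma vv: "i \<in> R \<Longrightarrow> v i * v i = -1" using rel by (simp add: Q_relations_def)
lemma ucomm: "i \<in> R \<Longrightarrow> j \<in> R \<Longrightarrow> u i * u j = u j * u i" using rel by (simp add: Q_relations_def)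
lemma vcomm: "i \<in> R \<Longrightarrow> j \<in> R \<Longrightarrow> v i * v j = v j * v i" using rel by (simp add: Q_relations_def)
lemma uv: "i \<in> R \<Longrightarrow> j \<in> R \<Longrightarrow> u i * v j = (if adj i j then - (v j * u i) else v j * u i)"
  using rel unfolding Q_relations_def adj_def by (auto split: if_splits)

lemma kk_insert: "finite B \<Longrightarrow> b \<notin> B \<Longrightarrow> kk (insert b B) j = kk B j + (if adj b j then 1 else 0)"
proof -
  assume f: "finite B" and b: "b \<notin> B"
  have "{i\<in>insert b B. adj i j} = (if adj b j then insert b {i\<in>B. adj i j} else {i\<in>B. adj i j})" by auto
  thus ?thesis using f b by (simp add: kk_def)
qed
lemma kk_empty[simp]: "kk {} j = 0" by (simp add: kk_def)
lemma adj_sym: "adj i j = adj j i" by (auto simp: adj_def)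

lemma sign_central: "(-1::'a)^k * x = x * (-1)^k"
  by (simp add: minus_one_power_iff)
lemma sign_left: "x * ((-1::'a)^k * y) = (-1)^k * (x * y)"
  by (simp add: minus_one_power_iff)
lemma sign_mult: "(-1::'a)^e * ((-1)^k * y) = (-1)^(k + e) * y"
  by (simp add: minus_one_power_iff)

definition U :: "nat set \<Rightarrow> 'a" where "U A = Finite_Set.fold (\<lambda>i x. u i * x) 1 A"
definition V :: "nat set \<Rightarrow> 'a" where "V A = Finite_Set.fold (\<lambda>i x. v i * x) 1 A"

lemma cfc_u: "comp_fun_commute_on R (\<lambda>i x. u i * x)"
  by unfold_locales (auto simp: fun_eq_iff mult.assoc[symmetric] ucomm)
lemma cfc_v: "comp_fun_commute_on R (\<lambda>i x. v i * x)"
  by unfold_locales (auto simp: fun_eq_iff mult.assoc[symmetric] vcomm)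

lemma U_empty[simp]: "U {} = 1" by (simp add: U_def)
lemma V_empty[simp]: "V {} = 1" by (simp add: V_def)
lemma U_insert: "finite A \<Longrightarrow> A \<subseteq> R \<Longrightarrow> i \<in> R \<Longrightarrow> i \<notin> A \<Longrightarrow> U (insert i A) = u i * U A"
  unfolding U_def by (rule comp_fun_commute_on.fold_insert[OF cfc_u]) auto
lemma V_insert: "finite A \<Longrightarrow> A \<subseteq> R \<Longrightarrow> i \<in> R \<Longrightarrow> i \<notin> A \<Longrightarrow> V (insert i A) = v i * V A"
  unfolding V_def by (rule comp_fun_commute_on.fold_insert[OF cfc_v]) auto

lemma U_comm_gen: "finite A \<Longrightarrow> A \<subseteq> R \<Longrightarrow> (\<forall>j\<in>A. y * u j = u j * y) \<Longrightarrow> y * U A = U A * y"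
proof (induction A rule: finite_induct)
  case empty then show ?case by simp
next
  case (insert a A)
  have IH: "y * U A = U A * y" and ya: "y * u a = u a * y" using insert by auto
  have "y * U (insert a A) = y * (u a * U A)" using insert by (simp add: U_insert)
  also have "\<dots> = u a * (U A * y)" by (metis IH ya mult.assoc)
  also have "\<dots> = U (insert a A) * y" using insert by (simp add: U_insert mult.assoc)
  finally show ?case .
qed
lemma V_comm_gen: "finite A \<Longrightarrow> A \<subseteq> R \<Longrightarrow> (\<forall>j\<in>A. y * v j = v j * y) \<Longrightarrow> y * V A = V A * y"
proof (induction A rule: finite_induct)
  case empty then show ?case by simp
next
  case (insert a A)
  have IH: "y * V A = V A * y" and ya: "y * v a = v a * y" using insert by auto
  have "y * V (insert a A) = y * (v a * V A)" using insert by (simp add: V_insert)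
  also have "\<dots> = v a * (V A * y)" by (metis IH ya mult.assoc)
  also have "\<dots> = V (insert a A) * y" using insert by (simp add: V_insert mult.assoc)
  finally show ?case .
qed

lemma u_U: "i \<in> R \<Longrightarrow> A \<subseteq> R \<Longrightarrow> u i * U A = (if i \<in> A then - U (A - {i}) else U (insert i A))"
proof -
  assume i: "i \<in> R" and A: "A \<subseteq> R"
  have fA: "finite A" using A finite_subset by blast
  show ?thesis
  proof (cases "i \<in> A")
    case True
    moreover have "insert i (A - {i}) = A" using True by blast
    ultimately have "U A = u i * U (A - {i})" using U_insert[of "A - {i}" i] fA A i
      by auto
    then have "u i * U A = (u i * u i) * U (A - {i})" by (simp add: mult.assoc)
    then show ?thesis using True uu[OF i] by simp
  next
    case False then show ?thesis using U_insert[OF fA A i] by simp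
  qed
qed
lemma v_V: "i \<in> R \<Longrightarrow> A \<subseteq> R \<Longrightarrow> v i * V A = (if i \<in> A then - V (A - {i}) else V (insert i A))"
proof -
  assume i: "i \<in> R" and A: "A \<subseteq> R"
  have fA: "finite A" using A finite_subset by blast
  show ?thesis
  proof (cases "i \<in> A")
    case True
    moreover have "insert i (A - {i}) = A" using True by blast
    ultimately have "V A = v i * V (A - {i})" using V_insert[of "A - {i}" i] fA A i
      by auto
    then have "v i * V A = (v i * v i) * V (A - {i})" by (simp add: mult.assoc)
    then show ?thesis using True vv[OF i] by simp
  next
    case False then show ?thesis using V_insert[OF fA A i] by simp
  qed
qed

lemma UU: "finite A \<Longrightarrow> A \<subseteq> R \<Longrightarrow> U A * U A = (-1)^card A"
proof (induction A rule: finite_induct)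
  case empty then show ?case by simp
next
  case (insert a A)
  have c: "u a * U A = U A * u a" using insert ucomm by (intro U_comm_gen) auto
  have "U (insert a A) * U (insert a A) = u a * (U A * u a) * U A"
    using insert by (simp add: U_insert mult.assoc)
  also have "\<dots> = (u a * u a) * (U A * U A)" by (simp add: c[symmetric] mult.assoc)
  also have "\<dots> = (-1)^card (insert a A)" using insert uu by simp
  finally show ?case .
qed
lemma VV: "finite A \<Longrightarrow> A \<subseteq> R \<Longrightarrow> V A * V A = (-1)^card A"
proof (induction A rule: finite_induct)
  case empty then show ?case by simp
next
  case (insert a A)
  have c: "v a * V A = V A * v a" using insert vcomm by (intro V_comm_gen) auto
  have "V (insert a A) * V (insert a A) = v a * (V A * v a) * V A"
    using insert by (simp add: V_insert mult.assoc)
  also have "\<dots> = (v a * v a) * (V A * V A)" by (simp add: c[symmetric] mult.assoc)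
  also have "\<dots> = (-1)^card (insert a A)" using insert vv by simp
  finally show ?case .
qed

lemma u_V: assumes "j \<in> R" shows "finite B \<Longrightarrow> B \<subseteq> R \<Longrightarrow> u j * V B = (-1)^(kk B j) * (V B * u j)"
proof (induction B rule: finite_induct)
  case empty then show ?case by simp
next
  case (insert b B)
  have e: "u j * v b = (-1)^(if adj b j then 1 else 0) * (v b * u j)"
  proof -
    have "b \<in> R" using insert by auto
    moreover have "adj j b = adj b j" by (rule adj_sym)
    ultimately show ?thesis using uv[of j b] assms by (cases "adj b j") simp_all
  qed
  have "u j * V (insert b B) = (u j * v b) * V B" using insert by (simp add: V_insert mult.assoc)
  also have "\<dots> = (-1)^(if adj b j then 1 else 0) * (v b * (u j * V B))"
    by (simp add: e mult.assoc)
  also have "\<dots> = (-1)^(if adj b j then 1 else 0) * (v b * ((-1)^(kk B j) * (V B * u j)))"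
    using insert by simp
  also have "\<dots> = (-1)^(if adj b j then 1 else 0) * ((-1)^(kk B j) * (v b * (V B * u j)))"
    by (simp only: sign_left[of "v b" "kk B j" "V B * u j"])
  also have "\<dots> = (-1)^(kk B j + (if adj b j then 1 else 0)) * (v b * (V B * u j))"
    by (rule sign_mult)
  also have "\<dots> = (-1)^(kk (insert b B) j) * (V (insert b B) * u j)"
    using insert by (simp add: kk_insert V_insert mult.assoc)
  finally show ?case .
qed
lemma v_U: assumes "j \<in> R" shows "finite A \<Longrightarrow> A \<subseteq> R \<Longrightarrow> v j * U A = (-1)^(kk A j) * (U A * v j)"
proof (induction A rule: finite_induct)
  case empty then show ?case by simp
next
  case (insert b B)
  have e: "v j * u b = (-1)^(if adj b j then 1 else 0) * (u b * v j)"
  proof -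
    have "b \<in> R" using insert by auto
    then have "u b * v j = (if adj b j then - (v j * u b) else v j * u b)" using uv[of b j] assms by simp
    then show ?thesis by (cases "adj b j") (simp_all add: minus_equation_iff[of "u b * v j"])
  qed
  have "v j * U (insert b B) = (v j * u b) * U B" using insert by (simp add: U_insert mult.assoc)
  also have "\<dots> = (-1)^(if adj b j then 1 else 0) * (u b * (v j * U B))"
    by (simp add: e mult.assoc)
  also have "\<dots> = (-1)^(if adj b j then 1 else 0) * (u b * ((-1)^(kk B j) * (U B * v j)))"
    using insert by simp
  also have "\<dots> = (-1)^(if adj b j then 1 else 0) * ((-1)^(kk B j) * (u b * (U B * v j)))"
    by (simp only: sign_left[of "u b" "kk B j" "U B * v j"])
  also have "\<dots> = (-1)^(kk B j + (if adj b j then 1 else 0)) * (u b * (U B * v j))"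
    by (rule sign_mult)
  also have "\<dots> = (-1)^(kk (insert b B) j) * (U (insert b B) * v j)"
    using insert by (simp add: kk_insert U_insert mult.assoc)
  finally show ?case .
qed

end


lemma quat_w:
  fixes a b m :: "'a::ring_1"
  assumes aa: "a * a = -1" and bb: "b * b = -1" and ab: "b * a = - (a * b)"
   and am: "a * m = (if pa then 1 else -1) * (m * a)"
   and bm: "b * m = (if pb then 1 else -1) * (m * b)"
  shows "(1 + a + b + a * b) * m =
     (if pa \<and> pb then 1 else if \<not> pa \<and> pb then a else if pa \<and> \<not> pb then a * b else b) * m * (1 + a + b + a * b)"
proof -
  have aa': "a * (a * y) = - y" for y using aa by (metis mult.assoc mult_minus1)
  have bb': "b * (b * y) = - y" for y using bb by (metis mult.assoc mult_minus1)
  have ab': "b * (a * y) = - (a * (b * y))" for y using ab by (metis mult.assoc mult_minus_left)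
  have am': "a * (m * y) = (if pa then 1 else -1) * (m * (a * y))" for y
    using am by (metis mult.assoc)
  have bm': "b * (m * y) = (if pb then 1 else -1) * (m * (b * y))" for y
    using bm by (metis mult.assoc)
  show ?thesis
    by (cases pa; cases pb; simp add: algebra_simps aa aa' bb bb' ab ab' am am' bm bm')
qed

lemma quat_sq:
  fixes a b :: "'a::ring_1"
  assumes aa: "a * a = -1" and bb: "b * b = -1" and ab: "b * a = - (a * b)"
  shows "(1 + a + b + a * b) * (1 + a + b + a * b) = (1 + a + b + a * b) + (1 + a + b + a * b) - 4"
proof -
  have aa': "a * (a * y) = - y" for y using aa by (metis mult.assoc mult_minus1)
  have bb': "b * (b * y) = - y" for y using bb by (metis mult.assoc mult_minus1)
  have ab': "b * (a * y) = - (a * (b * y))" for y using ab by (metis mult.assoc mult_minus_left)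
  have "(1 + a + b + a * b) * (1 + a + b + a * b) + 4 = (1 + a + b + a * b) + (1 + a + b + a * b)"
    by (simp add: algebra_simps aa aa' bb bb' ab ab')
  then show ?thesis by (simp add: algebra_simps)
qed


context QS begin

abbreviation "I \<equiv> Pow R \<times> Pow R"
definition mon :: "nat set \<times> nat set \<Rightarrow> 'a" where "mon p = U (fst p) * V (snd p)"

lemma finI: "finite I" by simp

definition pm :: "'a \<Rightarrow> bool" where
  "pm x \<longleftrightarrow> (\<exists>e q. (e = 1 \<or> e = -1) \<and> q \<in> I \<and> x = e * mon q)"

lemma pm_mon: "p \<in> I \<Longrightarrow> pm (mon p)"
  unfolding pm_def by (rule exI[of _ 1]) auto

lemma pm_neg: "pm x \<Longrightarrow> pm (- x)"
  unfolding pm_def by (metis minus_minus mult_minus_left)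

lemma pm_u: assumes i: "i \<in> R" and x: "pm x" shows "pm (u i * x)"
proof -
  obtain e A B where e: "e = 1 \<or> e = -1" and AB: "A \<subseteq> R" "B \<subseteq> R" and xe: "x = e * mon (A, B)"
    using x unfolding pm_def by auto
  have ec: "u i * e = e * u i" using e by auto
  have "u i * x = e * ((u i * U A) * V B)" by (simp add: xe mon_def mult.assoc[symmetric] ec)
  also have "\<dots> = e * (if i \<in> A then - mon (A - {i}, B) else mon (insert i A, B))"
    using u_U[OF i AB(1)] by (simp add: mon_def)
  finally have h: "u i * x = e * (if i \<in> A then - mon (A - {i}, B) else mon (insert i A, B))" .
  show ?thesis
  proof (cases "i \<in> A")
    case True
    have "u i * x = (- e) * mon (A - {i}, B)" using h True by simp
    moreover have "- e = 1 \<or> - e = -1" using e by auto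
    moreover have "(A - {i}, B) \<in> I" using AB by auto
    ultimately show ?thesis unfolding pm_def by blast
  next
    case False
    have "u i * x = e * mon (insert i A, B)" using h False by simp
    moreover have "(insert i A, B) \<in> I" using AB i by auto
    ultimately show ?thesis unfolding pm_def using e by blast
  qed
qed

lemma pm_v: assumes i: "i \<in> R" and x: "pm x" shows "pm (v i * x)"
proof -
  obtain e A B where e: "e = 1 \<or> e = -1" and AB: "A \<subseteq> R" "B \<subseteq> R" and xe: "x = e * mon (A, B)"
    using x unfolding pm_def by auto
  have fA: "finite A" using AB finite_subset by blast
  have ec: "v i * e = e * v i" using e by auto
  have "v i * x = e * ((v i * U A) * V B)" by (simp add: xe mon_def mult.assoc[symmetric] ec)
  also have "\<dots> = e * ((-1)^(kk A i) * (U A * (v i * V B)))"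
    using v_U[OF i fA AB(1)] by (simp add: mult.assoc)
  also have "\<dots> = (e * (-1)^(kk A i)) * (if i \<in> B then - mon (A, B - {i}) else mon (A, insert i B))"
    using v_V[OF i AB(2)] by (simp add: mon_def mult.assoc)
  finally have h: "v i * x = (e * (-1)^(kk A i)) * (if i \<in> B then - mon (A, B - {i}) else mon (A, insert i B))" .
  have e2: "e * (-1)^(kk A i) = 1 \<or> e * (-1)^(kk A i) = -1" using e by (auto simp: minus_one_power_iff)
  show ?thesis
  proof (cases "i \<in> B")
    case True
    have "v i * x = (- (e * (-1)^(kk A i))) * mon (A, B - {i})" using h True by simp
    moreover have "- (e * (-1)^(kk A i)) = 1 \<or> - (e * (-1)^(kk A i)) = -1" using e2 by auto
    moreover have "(A, B - {i}) \<in> I" using AB by auto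
    ultimately show ?thesis unfolding pm_def by blast
  next
    case False
    have "v i * x = (e * (-1)^(kk A i)) * mon (A, insert i B)" using h False by simp
    moreover have "(A, insert i B) \<in> I" using AB i by auto
    ultimately show ?thesis unfolding pm_def using e2 by blast
  qed
qed

lemma pm_sign: "pm x \<Longrightarrow> e = 1 \<or> e = -1 \<Longrightarrow> pm (e * x)"
  using pm_neg by auto

lemma U_single: "i \<in> R \<Longrightarrow> U {i} = u i"
  using U_insert[of "{}" i] by simp
lemma V_single: "i \<in> R \<Longrightarrow> V {i} = v i"
  using V_insert[of "{}" i] by simp
lemma mon_u: "i \<in> R \<Longrightarrow> mon ({i}, {}) = u i" by (simp add: mon_def U_single)
lemma mon_v: "i \<in> R \<Longrightarrow> mon ({}, {i}) = v i" by (simp add: mon_def V_single)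

lemma mon_u_comm: assumes j: "j \<in> R" and p: "p \<in> I"
  shows "u j * mon p = (-1)^(kk (snd p) j) * (mon p * u j)"
proof -
  obtain A B where pAB: "p = (A, B)" and AB: "A \<subseteq> R" "B \<subseteq> R" using p by auto
  have fA: "finite A" and fB: "finite B" using AB finite_subset by blast+
  have c: "u j * U A = U A * u j" using AB fA ucomm j by (intro U_comm_gen) auto
  have "u j * mon p = (u j * U A) * V B" by (simp add: pAB mon_def mult.assoc)
  also have "\<dots> = U A * (u j * V B)" by (simp add: c mult.assoc)
  also have "\<dots> = U A * ((-1)^(kk B j) * (V B * u j))" using u_V[OF j fB AB(2)] by simp
  also have "\<dots> = (-1)^(kk (snd p) j) * (mon p * u j)"
    by (simp only: sign_left pAB mon_def snd_conv fst_conv mult.assoc)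
  finally show ?thesis .
qed

lemma mon_v_comm: assumes j: "j \<in> R" and p: "p \<in> I"
  shows "v j * mon p = (-1)^(kk (fst p) j) * (mon p * v j)"
proof -
  obtain A B where pAB: "p = (A, B)" and AB: "A \<subseteq> R" "B \<subseteq> R" using p by auto
  have fA: "finite A" and fB: "finite B" using AB finite_subset by blast+
  have c: "v j * V B = V B * v j" using AB fB vcomm j by (intro V_comm_gen) auto
  have "v j * mon p = (v j * U A) * V B" by (simp add: pAB mon_def mult.assoc)
  also have "\<dots> = ((-1)^(kk A j) * (U A * v j)) * V B" using v_U[OF j fA AB(1)] by simp
  also have "\<dots> = (-1)^(kk A j) * (U A * (V B * v j))" by (simp add: c mult.assoc)
  also have "\<dots> = (-1)^(kk (fst p) j) * (mon p * v j)"
    by (simp only: pAB mon_def snd_conv fst_conv mult.assoc)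
  finally show ?thesis .
qed

definition Sp :: "'a set" where "Sp = {x. \<exists>c. x = (\<Sum>p\<in>I. \<phi> (c p) * mon p)}"

lemma SpI: "x = (\<Sum>p\<in>I. \<phi> (c p) * mon p) \<Longrightarrow> x \<in> Sp"
  unfolding Sp_def by blast

lemma Sp_add: "x \<in> Sp \<Longrightarrow> y \<in> Sp \<Longrightarrow> x + y \<in> Sp"
proof -
  assume "x \<in> Sp" "y \<in> Sp"
  then obtain c d where x: "x = (\<Sum>p\<in>I. \<phi> (c p) * mon p)" and y: "y = (\<Sum>p\<in>I. \<phi> (d p) * mon p)"
    unfolding Sp_def by auto
  have "x + y = (\<Sum>p\<in>I. \<phi> (c p + d p) * mon p)"
    by (simp add: x y sum.distrib distrib_right)
  thus ?thesis by (rule SpI)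
qed

lemma Sp_zero: "0 \<in> Sp"
proof -
  have "0 = (\<Sum>p\<in>I. \<phi> ((\<lambda>_. 0) p) * mon p)" by simp
  thus ?thesis by (rule SpI)
qed

lemma Sp_sum: "finite F \<Longrightarrow> (\<forall>i\<in>F. f i \<in> Sp) \<Longrightarrow> sum f F \<in> Sp"
  by (induction F rule: finite_induct) (auto intro: Sp_zero Sp_add)

lemma Sp_single: assumes q: "q \<in> I" shows "\<phi> d * mon q \<in> Sp"
proof -
  have "(\<Sum>p\<in>I. \<phi> (if p = q then d else 0) * mon p) = (\<Sum>p\<in>I. if p = q then \<phi> d * mon q else 0)"
    by (rule sum.cong) auto
  also have "\<dots> = \<phi> d * mon q" using q finI by simp
  finally show ?thesis by (intro SpI[of _ "\<lambda>p. if p = q then d else 0"]) simp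
qed

lemma Sp_pm: assumes "pm x" shows "\<phi> d * x \<in> Sp"
proof -
  obtain e q where e: "e = 1 \<or> e = -1" and q: "q \<in> I" and x: "x = e * mon q"
    using assms unfolding pm_def by auto
  show ?thesis
  proof (cases "e = 1")
    case True then show ?thesis using x Sp_single[OF q] by simp
  next
    case False
    then have h: "\<phi> d * x = \<phi> (- d) * mon q" using e x by simp
    show ?thesis using h Sp_single[OF q, of "-d"] by (simp only:)
  qed
qed

lemma Sp_scal: "z \<in> Sp \<Longrightarrow> \<phi> d * z \<in> Sp"
proof -
  assume "z \<in> Sp"
  then obtain c where z: "z = (\<Sum>p\<in>I. \<phi> (c p) * mon p)" unfolding Sp_def by auto
  have "\<phi> d * z = (\<Sum>p\<in>I. \<phi> (d * c p) * mon p)"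
    by (simp add: z sum_distrib_left mult.assoc)
  thus ?thesis by (rule SpI)
qed

lemma Sp_mult_pm: assumes y: "\<And>x. pm x \<Longrightarrow> pm (y * x)" and z: "z \<in> Sp" shows "y * z \<in> Sp"
proof -
  obtain c where zc: "z = (\<Sum>p\<in>I. \<phi> (c p) * mon p)" using z unfolding Sp_def by auto
  have "y * z = (\<Sum>p\<in>I. \<phi> (c p) * (y * mon p))"
    unfolding zc sum_distrib_left by (rule sum.cong) (simp_all, metis phi_central mult.assoc)
  also have "\<dots> \<in> Sp" using y pm_mon by (intro Sp_sum) (auto intro: Sp_pm)
  finally show ?thesis .
qed

end


locale QS2 = QS n \<phi> u v for n \<phi> and u v :: "nat \<Rightarrow> 'a::ring_1" +
  fixes q :: complex
  assumes q3: "q ^ 3 = -1"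
begin

definition s :: "nat \<Rightarrow> 'a" where "s i = s_elt \<phi> q u v i"
abbreviation "w i \<equiv> 1 + u i + v i + u i * v i"
definition \<alpha> :: complex where "\<alpha> = - 1 / (2 * q)"

lemma s_def': "s i = \<phi> \<alpha> * w i" by (simp add: s_def s_elt_def \<alpha>_def)

lemma phi_left: "x * (\<phi> c * y) = \<phi> c * (x * y)"
proof -
  have "x * (\<phi> c * y) = (x * \<phi> c) * y" by (simp only: mult.assoc)
  also have "\<dots> = (\<phi> c * x) * y" by (simp only: phi_central)
  finally show ?thesis by (simp only: mult.assoc)
qed

lemma vu: "i \<in> R \<Longrightarrow> v i * u i = - (u i * v i)"
  using uv[of i i] by (simp add: adj_def)

lemma ww: "i \<in> R \<Longrightarrow> w i * w i = w i + w i - 4"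
  by (rule quat_sq[OF uu vv vu])

lemma cube_gen: fixes X :: "'b::ring_1" assumes h: "X * X = X + X - 4" shows "X * (X * X) = - 8"
proof -
  have X4: "X * 4 = X + X + X + X" by (simp only: numeral_Bit0 numeral_One distrib_left mult_1_right add.assoc)
  have "X * (X * X) = X * X + X * X - X * 4" by (simp add: h algebra_simps)
  also have "\<dots> = -8" by (simp add: h X4 algebra_simps)
  finally show ?thesis .
qed

lemma www: assumes "i \<in> R" shows "w i * (w i * w i) = - 8"
  by (rule cube_gen[OF ww[OF assms]])

lemma q_nz: "q \<noteq> 0" using q3 by auto

lemma alpha3: "\<alpha> ^ 3 * 8 = 1"
proof -
  have "\<alpha> ^ 3 = (-1)^3 / (2^3 * q^3)" unfolding \<alpha>_def by (simp add: power_divide power_mult_distrib)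
  also have "\<dots> = 1 / 8" using q3 by simp
  finally show ?thesis by simp
qed

lemma s_cube: assumes i: "i \<in> R" shows "s i * (s i * s i) = -1"
proof -
  have cP: "w i * (\<phi> \<alpha> * y) = \<phi> \<alpha> * (w i * y)" for y by (rule phi_left)
  have "s i * (s i * s i) = \<phi> \<alpha> * (\<phi> \<alpha> * (\<phi> \<alpha> * (w i * (w i * w i))))"
    unfolding s_def' by (simp only: mult.assoc cP)
  also have "\<dots> = \<phi> (\<alpha>^3) * (w i * (w i * w i))"
    by (simp only: power3_eq_cube phi_mult mult.assoc)
  also have "\<dots> = - \<phi> (\<alpha>^3 * 8)" using www[OF i] by simp
  also have "\<dots> = -1" using alpha3 by simp
  finally show ?thesis .
qed

lemma s_inv_unique: assumes i: "i \<in> R" and "t * s i = 1" shows "t = - (s i * s i)"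
proof -
  have "t = t * (s i * (- (s i * s i)))" using s_cube[OF i] by simp
  also have "\<dots> = (t * s i) * (- (s i * s i))" by (simp add: mult.assoc)
  finally show ?thesis using assms by simp
qed

lemma s_has_inv: assumes i: "i \<in> R" shows "(- (s i * s i)) * s i = 1" "s i * (- (s i * s i)) = 1"
  using s_cube[OF i] by (simp_all add: mult.assoc)

lemma s_mon: assumes i: "i \<in> R" and p: "p \<in> I" shows "\<exists>y. pm y \<and> s i * mon p = y * s i"
proof -
  define pa where "pa = even (kk (snd p) i)"
  define pb where "pb = even (kk (fst p) i)"
  have am: "u i * mon p = (if pa then 1 else -1) * (mon p * u i)"
    using mon_u_comm[OF i p] by (simp add: pa_def minus_one_power_iff)
  have bm: "v i * mon p = (if pb then 1 else -1) * (mon p * v i)"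
    using mon_v_comm[OF i p] by (simp add: pb_def minus_one_power_iff)
  define x where "x = (if pa \<and> pb then 1 else if \<not> pa \<and> pb then u i else if pa \<and> \<not> pb then u i * v i else v i)"
  have wm: "w i * mon p = x * mon p * w i"
    unfolding x_def by (rule quat_w[OF uu[OF i] vv[OF i] vu[OF i] am bm])
  have "s i * mon p = \<phi> \<alpha> * (w i * mon p)" by (simp add: s_def' mult.assoc)
  also have "\<dots> = \<phi> \<alpha> * (x * mon p * w i)" by (simp only: wm)
  also have "\<dots> = (x * mon p) * s i" by (simp add: s_def' mult.assoc) (metis phi_central mult.assoc)
  finally have e: "s i * mon p = (x * mon p) * s i" .
  have "pm (x * mon p)"
    unfolding x_def using pm_mon[OF p] pm_u[OF i] pm_v[OF i] by (auto simp: mult.assoc)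
  with e show ?thesis by blast
qed

definition Cj :: "'a \<Rightarrow> bool" where "Cj g \<longleftrightarrow> (\<forall>p\<in>I. \<exists>y. pm y \<and> g * mon p = y * g)"

lemma Cj_1: "Cj 1" unfolding Cj_def using pm_mon by auto

lemma Cj_s: assumes i: "i \<in> R" and g: "Cj g" shows "Cj (s i * g)"
  unfolding Cj_def
proof
  fix p assume p: "p \<in> I"
  obtain y where y: "pm y" "g * mon p = y * g" using g p unfolding Cj_def by blast
  obtain e q where e: "e = 1 \<or> e = -1" and q: "q \<in> I" and ye: "y = e * mon q" using y(1) unfolding pm_def by blast
  obtain y' where y': "pm y'" "s i * mon q = y' * s i" using s_mon[OF i q] by blast
  have ec: "s i * e = e * s i" using e by auto
  have "s i * g * mon p = s i * (e * mon q) * g" by (simp add: mult.assoc y(2) ye)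
  also have "\<dots> = e * (y' * s i) * g" by (simp add: mult.assoc[symmetric] ec) (simp add: mult.assoc y'(2))
  also have "\<dots> = (e * y') * (s i * g)" by (simp add: mult.assoc)
  finally show "\<exists>y. pm y \<and> s i * g * mon p = y * (s i * g)" using pm_sign[OF y'(1) e] by blast
qed

lemma Cj_neg: "Cj g \<Longrightarrow> Cj (- g)"
  unfolding Cj_def by force

abbreviation "G \<equiv> gen_group (s ` R)"

lemma G_Cj: "g \<in> G \<Longrightarrow> Cj g"
proof (induction rule: gen_group.induct)
  case one then show ?case by (rule Cj_1)
next
  case (mult g s') then show ?case using Cj_s by auto
next
  case (inv g s' t)
  then obtain i where i: "i \<in> R" "s' = s i" by auto
  then have "t = - (s i * s i)" using inv s_inv_unique by blast
  then have "t * g = - (s i * (s i * g))" by (simp add: mult.assoc)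
  then show ?case using Cj_s[OF i(1)] Cj_neg inv by auto
qed

lemma Sp_one: "1 \<in> Sp"
proof -
  have "({}, {}) \<in> I" by auto
  from Sp_single[OF this, of 1] show ?thesis by (simp add: mon_def)
qed

lemma Sp_s: assumes i: "i \<in> R" and z: "z \<in> Sp" shows "s i * z \<in> Sp"
proof -
  have "s i * z = \<phi> \<alpha> * (z + u i * z + v i * z + u i * (v i * z))"
    by (simp add: s_def' algebra_simps)
  moreover have "u i * z \<in> Sp" using z pm_u[OF i] by (rule Sp_mult_pm[rotated])
  moreover have "v i * z \<in> Sp" using z pm_v[OF i] by (rule Sp_mult_pm[rotated])
  moreover have "u i * (v i * z) \<in> Sp" using \<open>v i * z \<in> Sp\<close> pm_u[OF i] by (rule Sp_mult_pm[rotated])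
  ultimately show ?thesis using z by (simp add: Sp_add Sp_scal)
qed

lemma Sp_neg: "z \<in> Sp \<Longrightarrow> - z \<in> Sp"
  using Sp_scal[of z "-1"] by simp

lemma G_Sp: "g \<in> G \<Longrightarrow> g \<in> Sp"
proof (induction rule: gen_group.induct)
  case one then show ?case by (rule Sp_one)
next
  case (mult g s') then show ?case using Sp_s by auto
next
  case (inv g s' t)
  then obtain i where i: "i \<in> R" "s' = s i" by auto
  then have "t = - (s i * s i)" using inv s_inv_unique by blast
  then have "t * g = - (s i * (s i * g))" by (simp add: mult.assoc)
  then show ?case using Sp_s[OF i(1)] Sp_neg inv by auto
qed

lemma G_s: assumes "i \<in> R" shows "s i \<in> G"
proof -
  have "s i * 1 \<in> G" by (rule gen_group.mult[OF gen_group.one]) (use assms in auto)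
  thus ?thesis by simp
qed

lemma G_t: assumes "i \<in> R" shows "- (s i * s i) \<in> G"
proof -
  have "- (s i * s i) * 1 \<in> G"
    by (rule gen_group.inv[OF gen_group.one, where s="s i"]) (use assms s_has_inv in auto)
  thus ?thesis by simp
qed

lemma G_mult: "x \<in> G \<Longrightarrow> y \<in> G \<Longrightarrow> x * y \<in> G"
proof (induction x rule: gen_group.induct)
  case one then show ?case by simp
next
  case (mult g s') then show ?case by (metis gen_group.mult mult.assoc)
next
  case (inv g s' t) then show ?case by (metis gen_group.inv mult.assoc)
qed

lemma G_inv: "g \<in> G \<Longrightarrow> \<exists>h\<in>G. h * g = 1 \<and> g * h = 1"
proof (induction rule: gen_group.induct)
  case one then show ?case using gen_group.one by force
next
  case (mult g s')
  then obtain i h where i: "i \<in> R" "s' = s i" and h: "h \<in> G" "h * g = 1" "g * h = 1" by auto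
  let ?t = "- (s i * s i)"
  have "h * ?t \<in> G" using G_mult[OF h(1) G_t[OF i(1)]] .
  moreover have "(h * ?t) * (s' * g) = 1"
  proof -
    have "(h * ?t) * (s' * g) = h * ((?t * s') * g)" by (simp only: mult.assoc)
    thus ?thesis using s_has_inv(1)[OF i(1)] h(2) i(2) by (simp only: mult_1_left)
  qed
  moreover have "(s' * g) * (h * ?t) = 1"
  proof -
    have "(s' * g) * (h * ?t) = s' * ((g * h) * ?t)" by (simp only: mult.assoc)
    thus ?thesis using s_has_inv(2)[OF i(1)] h(3) i(2) by (simp only: mult_1_left)
  qed
  ultimately show ?case by blast
next
  case (inv g s' t)
  then obtain i h where i: "i \<in> R" "s' = s i" and h: "h \<in> G" "h * g = 1" "g * h = 1" by auto
  have "h * s' \<in> G" using G_mult[OF h(1) G_s[OF i(1)]] i by simp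
  moreover have "(h * s') * (t * g) = 1"
  proof -
    have "(h * s') * (t * g) = h * ((s' * t) * g)" by (simp only: mult.assoc)
    thus ?thesis using inv h by simp
  qed
  moreover have "(t * g) * (h * s') = 1"
  proof -
    have "(t * g) * (h * s') = t * ((g * h) * s')" by (simp only: mult.assoc)
    thus ?thesis using inv h by simp
  qed
  ultimately show ?case by blast
qed

definition Zs :: "'a set" where "Zs = {z\<in>G. \<forall>p\<in>I. z * mon p = mon p * z}"

lemma Z_comm_s: assumes z: "\<forall>p\<in>I. z * mon p = mon p * z" and i: "i \<in> R" shows "z * s i = s i * z"
proof -
  have zu: "z * u i = u i * z" using z[rule_format, of "({i},{})"] i by (simp add: mon_u)
  have zv: "z * v i = v i * z" using z[rule_format, of "({},{i})"] i by (simp add: mon_v)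
  have "z * (u i * v i) = (z * u i) * v i" by (simp only: mult.assoc)
  also have "\<dots> = u i * (z * v i)" by (simp only: zu mult.assoc)
  also have "\<dots> = u i * v i * z" by (simp only: zv mult.assoc)
  finally have zuv: "z * (u i * v i) = u i * v i * z" .
  have zw: "z * w i = w i * z" by (simp only: distrib_left distrib_right zu zv zuv mult_1_left mult_1_right)
  have "z * s i = \<phi> \<alpha> * (z * w i)" unfolding s_def' by (rule phi_left)
  also have "\<dots> = s i * z" unfolding s_def' zw by (simp only: mult.assoc)
  finally show ?thesis .
qed

lemma Z_comm_G: assumes z: "\<forall>p\<in>I. z * mon p = mon p * z" shows "g \<in> G \<Longrightarrow> z * g = g * z"
proof (induction rule: gen_group.induct)
  case one then show ?case by simp
next
  case (mult g s')
  then obtain i where i: "i \<in> R" "s' = s i" by auto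
  then show ?case using Z_comm_s[OF z i(1)] mult by (metis mult.assoc)
next
  case (inv g s' t)
  then obtain i where i: "i \<in> R" "s' = s i" by auto
  then have "t = - (s i * s i)" using inv s_inv_unique by blast
  then have "z * t = t * z" using Z_comm_s[OF z i(1)] by (simp add: mult.assoc[symmetric]) (metis mult.assoc)
  then show ?case using inv by (metis mult.assoc)
qed

end


context QS2 begin

lemma inv_unique: "h * g = 1 \<Longrightarrow> g * h' = (1::'a) \<Longrightarrow> h = h'"
  by (metis mult.assoc mult_1_left mult_1_right)

definition ginv :: "'a \<Rightarrow> 'a" where "ginv g = (THE h. h * g = 1 \<and> g * h = 1)"

lemma ginv: assumes g: "g \<in> G" shows "ginv g \<in> G" "ginv g * g = 1" "g * ginv g = 1"
proof -
  obtain h where h: "h \<in> G" "h * g = 1" "g * h = 1" using G_inv[OF g] by blast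
  have "ginv g = h" unfolding ginv_def
    by (rule the_equality) (use h inv_unique in auto)
  with h show "ginv g \<in> G" "ginv g * g = 1" "g * ginv g = 1" by auto
qed

lemma Zs_G: "z \<in> Zs \<Longrightarrow> z \<in> G" by (simp add: Zs_def)
lemma Zs_comm: "z \<in> Zs \<Longrightarrow> g \<in> G \<Longrightarrow> z * g = g * z"
  unfolding Zs_def using Z_comm_G by blast
lemma Zs_one: "1 \<in> Zs" unfolding Zs_def by (auto intro: gen_group.one)
lemma Zs_mult: "z \<in> Zs \<Longrightarrow> z' \<in> Zs \<Longrightarrow> z * z' \<in> Zs"
proof -
  assume z: "z \<in> Zs" and z': "z' \<in> Zs"
  have "z * z' * mon p = mon p * (z * z')" if p: "p \<in> I" for p
  proof -
    have a: "z * mon p = mon p * z" and b: "z' * mon p = mon p * z'" using z z' p unfolding Zs_def by auto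
    have "z * z' * mon p = z * (z' * mon p)" by (simp only: mult.assoc)
    also have "\<dots> = (z * mon p) * z'" by (simp only: b mult.assoc)
    also have "\<dots> = mon p * (z * z')" by (simp only: a mult.assoc)
    finally show ?thesis .
  qed
  then show ?thesis unfolding Zs_def using G_mult z z' Zs_G by auto
qed
lemma Zs_inv: assumes z: "z \<in> Zs" shows "ginv z \<in> Zs"
proof -
  have zG: "z \<in> G" using z Zs_G by auto
  have "ginv z * mon p = mon p * ginv z" if p: "p \<in> I" for p
  proof -
    have zm: "z * mon p = mon p * z" using z p unfolding Zs_def by auto
    have "ginv z * mon p = ginv z * mon p * (z * ginv z)" using ginv(3)[OF zG] by simp
    also have "\<dots> = ginv z * (z * mon p) * ginv z" by (simp add: mult.assoc zm)
    also have "\<dots> = mon p * ginv z" using ginv(2)[OF zG] by (simp add: mult.assoc[symmetric])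
    finally show ?thesis .
  qed
  then show ?thesis unfolding Zs_def using ginv(1)[OF zG] by auto
qed

definition Pm :: "'a set" where "Pm = (\<lambda>(e, q). e * mon q) ` ({1, -1} \<times> I)"
lemma finite_Pm: "finite Pm" unfolding Pm_def by simp
lemma pm_Pm: "pm y \<Longrightarrow> y \<in> Pm" unfolding pm_def Pm_def by force

definition Sig :: "'a \<Rightarrow> (nat set \<times> nat set) \<Rightarrow> 'a" where
  "Sig g = (\<lambda>p. if p \<in> I then SOME y. pm y \<and> g * mon p = y * g else 0)"

lemma Sig_prop: assumes g: "g \<in> G" and p: "p \<in> I" shows "pm (Sig g p) \<and> g * mon p = Sig g p * g"
proof -
  have "\<exists>y. pm y \<and> g * mon p = y * g" using G_Cj[OF g] p unfolding Cj_def by blast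
  then have "pm (SOME y. pm y \<and> g * mon p = y * g) \<and> g * mon p = (SOME y. pm y \<and> g * mon p = y * g) * g"
    by (rule someI_ex)
  then show ?thesis using p by (simp add: Sig_def)
qed

definition FS where "FS = {f. \<forall>x. (x \<in> I \<longrightarrow> f x \<in> Pm) \<and> (x \<notin> I \<longrightarrow> f x = 0)}"
lemma finite_FS: "finite FS" unfolding FS_def using finite_Pm by (intro finite_set_of_finite_funs) auto

lemma Sig_range: "g \<in> G \<Longrightarrow> Sig g \<in> FS"
  using Sig_prop pm_Pm by (auto simp: Sig_def FS_def)

lemma Sig_eq: assumes g: "g \<in> G" and h: "h \<in> G" and eq: "Sig g = Sig h" shows "g * ginv h \<in> Zs"
proof -
  let ?hi = "ginv h"
  have hi: "?hi \<in> G" using ginv(1)[OF h] .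
  have "g * ?hi * mon q = mon q * (g * ?hi)" if q: "q \<in> I" for q
  proof -
    obtain y where y: "pm y" "?hi * mon q = y * ?hi" using G_Cj[OF hi] q unfolding Cj_def by blast
    obtain e p where e: "e = 1 \<or> e = -1" and p: "p \<in> I" and ye: "y = e * mon p"
      using y(1) unfolding pm_def by blast
    have ec: "x * e = e * x" for x using e by auto
    define y2 where "y2 = Sig h p"
    have hp: "h * mon p = y2 * h" using Sig_prop[OF h p] y2_def by simp
    have gp: "g * mon p = y2 * g" using Sig_prop[OF g p] eq y2_def by simp
    have "mon q = h * ?hi * mon q" using ginv(3)[OF h] by simp
    also have "\<dots> = h * (e * mon p) * ?hi" by (simp add: mult.assoc y(2) ye)
    also have "\<dots> = e * (h * mon p) * ?hi" by (simp add: mult.assoc[symmetric] ec)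
    also have "\<dots> = e * y2" using ginv(3)[OF h] by (simp add: hp mult.assoc)
    finally have mq: "mon q = e * y2" .
    have "g * ?hi * mon q = g * (e * mon p) * ?hi" by (simp add: mult.assoc y(2) ye)
    also have "\<dots> = e * (g * mon p) * ?hi" by (simp add: mult.assoc[symmetric] ec)
    also have "\<dots> = mon q * (g * ?hi)" by (simp add: gp mq mult.assoc)
    finally show ?thesis .
  qed
  then show ?thesis unfolding Zs_def using G_mult[OF g hi] by auto
qed

definition cls :: "'a \<Rightarrow> 'a set" where "cls g = (\<lambda>z. z * g) ` Zs"

lemma cls_mem: "g \<in> cls g" unfolding cls_def using Zs_one by force

lemma cls_G: "g \<in> G \<Longrightarrow> cls g \<subseteq> G" unfolding cls_def using Zs_G G_mult by auto

lemma cls_eqI: assumes z: "z \<in> Zs" and h: "h = z * g" shows "cls h = cls g"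
proof
  show "cls h \<subseteq> cls g" unfolding cls_def h using z Zs_mult by (auto simp: mult.assoc[symmetric])
  show "cls g \<subseteq> cls h"
  proof
    fix x assume "x \<in> cls g"
    then obtain z' where z': "z' \<in> Zs" "x = z' * g" unfolding cls_def by auto
    have zG: "z \<in> G" using z Zs_G by auto
    have "(z' * ginv z) * h = z' * ((ginv z * z) * g)" using h by (simp only: mult.assoc)
    then have "x = (z' * ginv z) * h" using z'(2) ginv(2)[OF zG] by simp
    moreover have "z' * ginv z \<in> Zs" using Zs_mult[OF z'(1) Zs_inv[OF z]] .
    ultimately show "x \<in> cls h" unfolding cls_def by blast
  qed
qed

lemma cls_eqI': assumes g: "g \<in> G" and h: "h \<in> G" and gh: "g * ginv h \<in> Zs" shows "cls g = cls h"
proof -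
  have "g = (g * ginv h) * h" using ginv(2)[OF h] by (simp add: mult.assoc)
  then show ?thesis using cls_eqI[OF gh] by blast
qed

lemma finite_cls: "finite (cls ` G)"
proof -
  define F where "F \<tau> = cls (SOME g. g \<in> G \<and> Sig g = \<tau>)" for \<tau>
  have "cls ` G \<subseteq> F ` (FS)"
  proof
    fix C assume "C \<in> cls ` G"
    then obtain g where g: "g \<in> G" "C = cls g" by auto
    let ?g' = "SOME g'. g' \<in> G \<and> Sig g' = Sig g"
    have g': "?g' \<in> G \<and> Sig ?g' = Sig g" by (rule someI[of _ g]) (use g in auto)
    have "g * ginv ?g' \<in> Zs" using Sig_eq[OF g(1)] g' by simp
    then have "cls g = cls ?g'" using cls_eqI'[OF g(1)] g' by blast
    then have "C = F (Sig g)" using g(2) by (simp add: F_def)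
    then show "C \<in> F ` (FS)" using Sig_range[OF g(1)] by blast
  qed
  moreover have "finite (F ` FS)" using finite_FS by simp
  ultimately show ?thesis by (rule finite_subset)
qed

definition rho :: "'a \<Rightarrow> 'a" where "rho g = (SOME r. r \<in> cls g)"
definition Rset :: "'a set" where "Rset = rho ` G"
definition zeta :: "'a \<Rightarrow> 'a" where "zeta g = g * ginv (rho g)"

lemma rho_cls: "rho g \<in> cls g" unfolding rho_def using cls_mem by (rule someI)
lemma rho_G: "g \<in> G \<Longrightarrow> rho g \<in> G" using rho_cls cls_G by blast
lemma rho_eq: "cls g = cls h \<Longrightarrow> rho g = rho h" unfolding rho_def by simp

lemma finite_Rset: "finite Rset"
proof -
  have "Rset = (\<lambda>C. SOME r. r \<in> C) ` (cls ` G)" unfolding Rset_def rho_def by (auto simp: image_image)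
  then show ?thesis using finite_cls by simp
qed

lemma Rset_G: "r \<in> Rset \<Longrightarrow> r \<in> G" unfolding Rset_def using rho_G by auto

lemma cls_rho: "cls (rho g) = cls g"
proof -
  obtain z where z: "z \<in> Zs" "rho g = z * g" using rho_cls unfolding cls_def by blast
  then show ?thesis using cls_eqI by blast
qed

lemma rho_Rset: "r \<in> Rset \<Longrightarrow> rho r = r"
proof -
  assume "r \<in> Rset"
  then obtain g0 where "r = rho g0" unfolding Rset_def by auto
  then show ?thesis using rho_eq[OF cls_rho[of g0]] by simp
qed

lemma zeta_Zs: assumes g: "g \<in> G" shows "zeta g \<in> Zs"
proof -
  obtain z where z: "z \<in> Zs" "rho g = z * g" using rho_cls unfolding cls_def by blast
  have zG: "z \<in> G" using z Zs_G by auto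
  have rG: "rho g \<in> G" using rho_G[OF g] .
  have eq: "g = ginv z * rho g" using z(2) ginv(2)[OF zG] by (simp add: mult.assoc[symmetric])
  have "zeta g = ginv z * rho g * ginv (rho g)" unfolding zeta_def
    using arg_cong[OF eq, of "\<lambda>x. x * ginv (rho g)"] by simp
  then have "zeta g = ginv z * (rho g * ginv (rho g))" by (simp add: mult.assoc)
  also have "\<dots> = ginv z" using ginv(3)[OF rG] by simp
  finally show ?thesis using Zs_inv[OF z(1)] by simp
qed

lemma zeta_decomp: "g \<in> G \<Longrightarrow> g = zeta g * rho g"
  unfolding zeta_def using ginv(2)[OF rho_G] by (simp add: mult.assoc)

lemma rho_Rset_mem: "g \<in> G \<Longrightarrow> rho g \<in> Rset" unfolding Rset_def by blast

lemma decomp_unique: assumes z: "z \<in> Zs" and r: "r \<in> Rset" and x: "x = z * r"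
  shows "rho x = r" "zeta x = z"
proof -
  have "cls x = cls r" using cls_eqI[OF z x] .
  then show rx: "rho x = r" using rho_eq rho_Rset[OF r] by metis
  have rG: "r \<in> G" using Rset_G[OF r] .
  have "zeta x = x * ginv r" unfolding zeta_def rx ..
  then show "zeta x = z" unfolding x using ginv(3)[OF rG] by (simp add: mult.assoc)
qed

lemma G_nonempty_Rset: "Rset \<noteq> {}" unfolding Rset_def using gen_group.one by blast

lemma zeta_mult: assumes r: "r \<in> Rset" and g: "g \<in> G" and h: "h \<in> G"
  shows "zeta (r * (g * h)) = zeta (r * g) * zeta (rho (r * g) * h)"
proof -
  have rg: "r * g \<in> G" using G_mult[OF Rset_G[OF r] g] .
  have r2: "rho (r * g) * h \<in> G" using G_mult[OF rho_G[OF rg] h] .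
  have "r * (g * h) = (zeta (r * g) * rho (r * g)) * h" using zeta_decomp[OF rg] by (simp add: mult.assoc)
  also have "\<dots> = zeta (r * g) * (rho (r * g) * h)" by (simp add: mult.assoc)
  also have "\<dots> = (zeta (r * g) * zeta (rho (r * g) * h)) * rho (rho (r * g) * h)"
    using zeta_decomp[OF r2] by (simp add: mult.assoc)
  finally have e: "r * (g * h) = (zeta (r * g) * zeta (rho (r * g) * h)) * rho (rho (r * g) * h)" .
  show ?thesis
    by (rule decomp_unique(2)[OF Zs_mult[OF zeta_Zs[OF rg] zeta_Zs[OF r2]] rho_Rset_mem[OF r2] e])
qed

lemma rho_perm: assumes g: "g \<in> G" shows "bij_betw (\<lambda>r. rho (r * g)) Rset Rset"
proof -
  have maps: "(\<lambda>r. rho (r * g)) ` Rset \<subseteq> Rset" using rho_Rset_mem G_mult Rset_G g by auto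
  have inj: "inj_on (\<lambda>r. rho (r * g)) Rset"
  proof
    fix r r' assume r: "r \<in> Rset" and r': "r' \<in> Rset" and eq: "rho (r * g) = rho (r' * g)"
    have rG: "r \<in> G" and r'G: "r' \<in> G" using r r' Rset_G by auto
    have rg: "r * g \<in> G" and r'g: "r' * g \<in> G" using G_mult rG r'G g by auto
    let ?z = "zeta (r * g) * ginv (zeta (r' * g))"
    have zz: "?z \<in> Zs" using Zs_mult[OF zeta_Zs[OF rg] Zs_inv[OF zeta_Zs[OF r'g]]] .
    have zr'G: "zeta (r' * g) \<in> G" using Zs_G zeta_Zs r'g by auto
    have "r * g = ?z * (r' * g)"
    proof -
      have "?z * (r' * g) = zeta (r * g) * ginv (zeta (r' * g)) * (zeta (r' * g) * rho (r' * g))"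
        using zeta_decomp[OF r'g] by simp
      also have "\<dots> = zeta (r * g) * rho (r' * g)"
        using ginv(2)[OF zr'G] by (simp add: mult.assoc[symmetric]) (simp add: mult.assoc)
      also have "\<dots> = r * g" using zeta_decomp[OF rg] eq by simp
      finally show ?thesis by simp
    qed
    then have "r = ?z * r'" using ginv(3)[OF g] by (metis mult.assoc mult_1_right)
    then have "cls r = cls r'" using cls_eqI[OF zz] by blast
    then show "r = r'" using rho_eq rho_Rset r r' by metis
  qed
  show ?thesis using maps inj finite_Rset
    by (simp add: bij_betw_def endo_inj_surj)
qed

lemma zeta_Rset_Zs: assumes r: "r \<in> Rset" and z: "z \<in> Zs" shows "zeta (r * z) = z"
proof -
  have "r * z = z * r" using Zs_comm[OF z Rset_G[OF r]] by simp
  then show ?thesis using decomp_unique(2)[OF z r] by blast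
qed

lemma zeta_Rset: assumes r: "r \<in> Rset" shows "zeta r = 1"
  using zeta_Rset_Zs[OF r Zs_one] by simp

end


context QS2 begin

definition eig :: "'a \<Rightarrow> bool" where "eig e \<longleftrightarrow> (\<forall>z\<in>Zs. \<exists>c. z * e = \<phi> c * e)"

lemma phi_cancel: assumes e: "e \<noteq> 0" and eq: "\<phi> c * e = \<phi> d * e" shows "c = d"
proof (rule ccontr)
  assume cd: "c \<noteq> d"
  have "\<phi> (c - d) * e = 0" using eq by (simp add: left_diff_distrib)
  then have "\<phi> (1 / (c - d)) * (\<phi> (c - d) * e) = 0" by simp
  then have "(\<phi> (1 / (c - d)) * \<phi> (c - d)) * e = 0" by (simp only: mult.assoc)
  then have "e = 0" using phi_inv_cancel[of "c - d"] cd by simp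
  with e show False by simp
qed

definition chi :: "'a \<Rightarrow> 'a \<Rightarrow> complex" where "chi e z = (SOME c. z * e = \<phi> c * e)"

lemma chi_prop: "eig e \<Longrightarrow> z \<in> Zs \<Longrightarrow> z * e = \<phi> (chi e z) * e"
  unfolding eig_def chi_def by (metis (mono_tags, lifting) someI_ex)

lemma chi_eq: "eig e \<Longrightarrow> e \<noteq> 0 \<Longrightarrow> z \<in> Zs \<Longrightarrow> z * e = \<phi> c * e \<Longrightarrow> chi e z = c"
  using chi_prop phi_cancel by metis

lemma chi_mult: assumes ee: "eig e" "e \<noteq> 0" and z: "z \<in> Zs" and z': "z' \<in> Zs"
  shows "chi e (z * z') = chi e z * chi e z'"
proof -
  have "z * z' * e = z * (\<phi> (chi e z') * e)" using chi_prop[OF ee(1) z'] by (simp add: mult.assoc)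
  also have "\<dots> = \<phi> (chi e z') * (z * e)" by (rule phi_left)
  also have "\<dots> = \<phi> (chi e z') * (\<phi> (chi e z) * e)" using chi_prop[OF ee(1) z] by simp
  also have "\<dots> = \<phi> (chi e z' * chi e z) * e" by (simp only: phi_mult mult.assoc)
  also have "\<dots> = \<phi> (chi e z * chi e z') * e" by (simp only: mult.commute[of "chi e z'" "chi e z"])
  finally show ?thesis by (rule chi_eq[OF ee Zs_mult[OF z z']])
qed

lemma chi_one: assumes ee: "eig e" "e \<noteq> 0" shows "chi e 1 = 1"
  by (rule chi_eq[OF ee Zs_one]) simp

definition Vt :: "'a \<Rightarrow> 'a \<Rightarrow> complex" where "Vt e g = (\<Prod>r\<in>Rset. chi e (zeta (r * g)))"

lemma Vt_mult: assumes ee: "eig e" "e \<noteq> 0" and g: "g \<in> G" and h: "h \<in> G"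
  shows "Vt e (g * h) = Vt e g * Vt e h"
proof -
  have "Vt e (g * h) = (\<Prod>r\<in>Rset. chi e (zeta (r * g)) * chi e (zeta (rho (r * g) * h)))"
    unfolding Vt_def
  proof (rule prod.cong[OF refl])
    fix r assume r: "r \<in> Rset"
    have rg: "r * g \<in> G" using G_mult[OF Rset_G[OF r] g] .
    have r2: "rho (r * g) * h \<in> G" using G_mult[OF rho_G[OF rg] h] .
    show "chi e (zeta (r * (g * h))) = chi e (zeta (r * g)) * chi e (zeta (rho (r * g) * h))"
      unfolding zeta_mult[OF r g h] by (rule chi_mult[OF ee zeta_Zs[OF rg] zeta_Zs[OF r2]])
  qed
  also have "\<dots> = Vt e g * (\<Prod>r\<in>Rset. chi e (zeta (rho (r * g) * h)))"
    unfolding Vt_def by (rule prod.distrib)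
  also have "(\<Prod>r\<in>Rset. chi e (zeta (rho (r * g) * h))) = Vt e h"
    unfolding Vt_def by (rule prod.reindex_bij_betw[OF rho_perm[OF g], of "\<lambda>r. chi e (zeta (r * h))"])
  finally show ?thesis .
qed

lemma Vt_one: assumes ee: "eig e" "e \<noteq> 0" shows "Vt e 1 = 1"
  unfolding Vt_def using zeta_Rset chi_one[OF ee] by simp

lemma Vt_Z: assumes ee: "eig e" "e \<noteq> 0" and z: "z \<in> Zs" shows "Vt e z = chi e z ^ card Rset"
  unfolding Vt_def using zeta_Rset_Zs[OF _ z] by simp

lemma s_six: assumes i: "i \<in> R" shows "s i * (s i * (s i * (s i * (s i * s i)))) = 1"
proof -
  have "s i * (s i * (s i * (s i * (s i * s i)))) = (s i * (s i * s i)) * (s i * (s i * s i))"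
    by (simp only: mult.assoc)
  also have "\<dots> = 1" using s_cube[OF i] by simp
  finally show ?thesis .
qed

lemma Vt_s6: assumes ee: "eig e" "e \<noteq> 0" and i: "i \<in> R" shows "Vt e (s i) ^ 6 = 1"
proof -
  have sG: "s i \<in> G" using G_s[OF i] .
  have p: "\<And>x. x \<in> G \<Longrightarrow> s i * x \<in> G" using G_mult[OF sG] .
  have "Vt e (s i * (s i * (s i * (s i * (s i * s i))))) = Vt e (s i) ^ 6"
    using sG p by (simp add: Vt_mult[OF ee] eval_nat_numeral)
  then show ?thesis using s_six[OF i] Vt_one[OF ee] by simp
qed

lemma Vt_pow6: assumes ee: "eig e" "e \<noteq> 0" shows "g \<in> G \<Longrightarrow> Vt e g ^ 6 = 1"
proof (induction rule: gen_group.induct)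
  case one then show ?case using Vt_one[OF ee] by simp
next
  case (mult g s')
  then obtain i where i: "i \<in> R" "s' = s i" by auto
  have gG: "g \<in> G" using mult.hyps by blast
  have "Vt e (s' * g) = Vt e (s i) * Vt e g" using Vt_mult[OF ee G_s[OF i(1)] gG] i by simp
  then show ?case using Vt_s6[OF ee i(1)] mult.IH by (simp add: power_mult_distrib)
next
  case (inv g s' t)
  then obtain i where i: "i \<in> R" "s' = s i" by auto
  have ts: "t * s' = 1" and gG: "g \<in> G" using inv.hyps by blast+
  have tG: "t \<in> G" using G_t[OF i(1)] s_inv_unique[OF i(1)] ts i(2) by simp
  have "Vt e t * Vt e (s i) = 1" using Vt_mult[OF ee tG G_s[OF i(1)]] ts i(2) Vt_one[OF ee] by simp
  then have "(Vt e t * Vt e (s i)) ^ 6 = 1" by simp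
  then have t6: "Vt e t ^ 6 = 1" using Vt_s6[OF ee i(1)] by (simp add: power_mult_distrib)
  have "Vt e (t * g) = Vt e t * Vt e g" using Vt_mult[OF ee tG gG] .
  then show ?case using t6 inv.IH by (simp add: power_mult_distrib)
qed

lemma chi_root: assumes ee: "eig e" "e \<noteq> 0" and z: "z \<in> Zs" shows "chi e z ^ (card Rset * 6) = 1"
  using Vt_pow6[OF ee Zs_G[OF z]] Vt_Z[OF ee z] by (simp add: power_mult)

lemma finite_G_from_family:
  fixes J :: "'j set" and e :: "'j \<Rightarrow> 'a"
  assumes J: "finite J" and sumJ: "(\<Sum>j\<in>J. e j) = 1" and eigJ: "\<forall>j\<in>J. eig (e j)"
  shows "finite G"
proof -
  define N where "N = card Rset * 6"
  have N: "N \<ge> 1" unfolding N_def using finite_Rset G_nonempty_Rset by (simp add: card_gt_0_iff Suc_leI)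
  define Roots where "Roots = {c::complex. c ^ N = 1}"
  have fR: "finite Roots" unfolding Roots_def using N by (intro finite_roots_unity) auto
  define KS where "KS = {f. \<forall>x. (x \<in> J \<longrightarrow> f x \<in> Roots) \<and> (x \<notin> J \<longrightarrow> f x = 1)}"
  have fKS: "finite KS" unfolding KS_def using J fR by (intro finite_set_of_finite_funs)
  define F where "F \<kappa> = (\<Sum>j\<in>J. \<phi> (\<kappa> j) * e j)" for \<kappa>
  have Zsub: "Zs \<subseteq> F ` KS"
  proof
    fix z assume z: "z \<in> Zs"
    define \<kappa> where "\<kappa> j = (if j \<in> J \<and> e j \<noteq> 0 then chi (e j) z else 1)" for j
    have "\<kappa> \<in> KS" unfolding KS_def Roots_def N_def \<kappa>_def using chi_root eigJ z by auto
    moreover have "z = F \<kappa>"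
    proof -
      have "z = z * (\<Sum>j\<in>J. e j)" using sumJ by simp
      also have "\<dots> = (\<Sum>j\<in>J. z * e j)" by (rule sum_distrib_left)
      also have "\<dots> = F \<kappa>" unfolding F_def
      proof (rule sum.cong[OF refl])
        fix j assume j: "j \<in> J"
        show "z * e j = \<phi> (\<kappa> j) * e j"
        proof (cases "e j = 0")
          case True then show ?thesis by simp
        next
          case False then show ?thesis using chi_prop[OF _ z] eigJ j by (simp add: \<kappa>_def)
        qed
      qed
      finally show ?thesis .
    qed
    ultimately show "z \<in> F ` KS" by blast
  qed
  have fZ: "finite Zs" using finite_subset[OF Zsub] fKS by simp
  have "G \<subseteq> (\<lambda>(z, r). z * r) ` (Zs \<times> Rset)"
  proof
    fix g assume g: "g \<in> G"
    have "g = zeta g * rho g" using zeta_decomp[OF g] .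
    moreover have "(zeta g, rho g) \<in> Zs \<times> Rset" using zeta_Zs[OF g] rho_Rset_mem[OF g] by simp
    ultimately show "g \<in> (\<lambda>(z, r). z * r) ` (Zs \<times> Rset)" by force
  qed
  then show ?thesis using fZ finite_Rset by (meson finite_SigmaI finite_imageI finite_subset)
qed

end


context QS2 begin

lemma filter_step:
  assumes yy: "y * y = -1" and J: "finite J" and zc: "z = (\<Sum>p\<in>J. \<phi> (c p) * mon p)"
    and zy: "z * y = y * z"
    and comm: "\<forall>p\<in>J. y * mon p = (if P p then 1 else -1) * (mon p * y)"
  shows "z = (\<Sum>p\<in>{p\<in>J. P p}. \<phi> (c p) * mon p)"
proof -
  have yzy: "y * z * y = - z"
  proof -
    have "y * z * y = y * (y * z)" by (simp only: mult.assoc zy)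
    also have "\<dots> = - z" by (simp only: mult.assoc[symmetric] yy) simp
    finally show ?thesis .
  qed
  have tm: "\<phi> (c p) * mon p - y * (\<phi> (c p) * mon p) * y = (if P p then \<phi> (2 * c p) * mon p else 0)"
    if p: "p \<in> J" for p
  proof -
    have "y * (\<phi> (c p) * mon p) * y = \<phi> (c p) * ((y * mon p) * y)"
      by (simp only: phi_left mult.assoc)
    also have "\<dots> = \<phi> (c p) * ((if P p then 1 else -1) * (mon p * (y * y)))"
      using comm p by (simp add: mult.assoc)
    also have "\<dots> = (if P p then - (\<phi> (c p) * mon p) else \<phi> (c p) * mon p)"
      using yy by simp
    finally have h: "y * (\<phi> (c p) * mon p) * y = (if P p then - (\<phi> (c p) * mon p) else \<phi> (c p) * mon p)" .
    have h2: "\<phi> (2 * c p) * mon p = \<phi> (c p) * mon p + \<phi> (c p) * mon p"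
      by (simp only: mult_2 phi_add distrib_right)
    show ?thesis using h h2 by (cases "P p") simp_all
  qed
  have "z + z = z - y * z * y" using yzy by simp
  also have "\<dots> = (\<Sum>p\<in>J. \<phi> (c p) * mon p - y * (\<phi> (c p) * mon p) * y)"
    unfolding zc by (simp add: sum_subtractf sum_distrib_left sum_distrib_right)
  also have "\<dots> = (\<Sum>p\<in>J. if P p then \<phi> (2 * c p) * mon p else 0)"
    using tm by (rule sum.cong[OF refl])
  also have "\<dots> = (\<Sum>p\<in>{p\<in>J. P p}. \<phi> (2 * c p) * mon p)"
    by (rule sum.inter_filter[OF J, symmetric])
  finally have zz: "z + z = (\<Sum>p\<in>{p\<in>J. P p}. \<phi> (2 * c p) * mon p)" .
  have "z = \<phi> (1/2) * (z + z)"
  proof -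
    have "\<phi> (1/2) * (z + z) = \<phi> (1/2) * (\<phi> 2 * z)" by (simp add: mult_2)
    also have "\<dots> = \<phi> (1/2 * 2) * z" by (simp only: phi_mult mult.assoc)
    finally show ?thesis by simp
  qed
  also have "\<dots> = (\<Sum>p\<in>{p\<in>J. P p}. \<phi> (1/2) * (\<phi> (2 * c p) * mon p))"
    unfolding zz by (rule sum_distrib_left)
  also have "\<dots> = (\<Sum>p\<in>{p\<in>J. P p}. \<phi> (c p) * mon p)"
    by (rule sum.cong[OF refl]) (simp only: mult.assoc[symmetric] phi_mult[symmetric], simp)
  finally show ?thesis .
qed

definition IT :: "nat set \<Rightarrow> (nat set \<times> nat set) set" where
  "IT T = {p\<in>I. \<forall>j\<in>T. even (kk (snd p) j) \<and> even (kk (fst p) j)}"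

lemma Zs_u: "z \<in> Zs \<Longrightarrow> j \<in> R \<Longrightarrow> z * u j = u j * z"
proof -
  assume z: "z \<in> Zs" and j: "j \<in> R"
  have "({j},{}) \<in> I" using j by auto
  then have "z * mon ({j},{}) = mon ({j},{}) * z" using z unfolding Zs_def by blast
  then show ?thesis using mon_u[OF j] by simp
qed
lemma Zs_v: "z \<in> Zs \<Longrightarrow> j \<in> R \<Longrightarrow> z * v j = v j * z"
proof -
  assume z: "z \<in> Zs" and j: "j \<in> R"
  have "({},{j}) \<in> I" using j by auto
  then have "z * mon ({},{j}) = mon ({},{j}) * z" using z unfolding Zs_def by blast
  then show ?thesis using mon_v[OF j] by simp
qed

lemma Zs_repr_T: assumes z: "z \<in> Zs" and c: "z = (\<Sum>p\<in>I. \<phi> (c p) * mon p)"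
  shows "finite T \<Longrightarrow> T \<subseteq> R \<Longrightarrow> z = (\<Sum>p\<in>IT T. \<phi> (c p) * mon p)"
proof (induction T rule: finite_induct)
  case empty
  have "IT {} = I" by (auto simp: IT_def)
  then show ?case using c by simp
next
  case (insert j T)
  have j: "j \<in> R" using insert by auto
  have IH: "z = (\<Sum>p\<in>IT T. \<phi> (c p) * mon p)" using insert by auto
  have fIT: "finite (IT T)" unfolding IT_def by simp
  have sub: "IT T \<subseteq> I" unfolding IT_def by auto
  have s1: "z = (\<Sum>p\<in>{p\<in>IT T. even (kk (snd p) j)}. \<phi> (c p) * mon p)"
  proof (rule filter_step[OF uu[OF j] fIT IH Zs_u[OF z j]])
    show "\<forall>p\<in>IT T. u j * mon p = (if even (kk (snd p) j) then 1 else -1) * (mon p * u j)"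
      using mon_u_comm[OF j] sub by (auto simp: minus_one_power_iff)
  qed
  have fIT2: "finite {p\<in>IT T. even (kk (snd p) j)}" using fIT by simp
  have s2: "z = (\<Sum>p\<in>{p\<in>{p\<in>IT T. even (kk (snd p) j)}. even (kk (fst p) j)}. \<phi> (c p) * mon p)"
  proof (rule filter_step[OF vv[OF j] fIT2 s1 Zs_v[OF z j]])
    show "\<forall>p\<in>{p\<in>IT T. even (kk (snd p) j)}. v j * mon p = (if even (kk (fst p) j) then 1 else -1) * (mon p * v j)"
      using mon_v_comm[OF j] sub by (auto simp: minus_one_power_iff)
  qed
  have "{p\<in>{p\<in>IT T. even (kk (snd p) j)}. even (kk (fst p) j)} = IT (insert j T)"
    unfolding IT_def by auto
  then show ?case using s2 by simp
qed

definition Kset :: "nat set set" where "Kset = {A. A \<subseteq> R \<and> (\<forall>j\<in>R. even (kk A j))}"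
definition Xs :: "nat set" where "Xs = {i\<in>R. i mod 3 \<noteq> 0}"

lemma Zs_repr: assumes z: "z \<in> Zs"
  shows "\<exists>c. z = (\<Sum>p\<in>Kset \<times> Kset. \<phi> (c p) * mon p)"
proof -
  obtain c where c: "z = (\<Sum>p\<in>I. \<phi> (c p) * mon p)" using G_Sp[OF Zs_G[OF z]] unfolding Sp_def by auto
  have "z = (\<Sum>p\<in>IT R. \<phi> (c p) * mon p)" using Zs_repr_T[OF z c] by simp
  moreover have "IT R = Kset \<times> Kset" unfolding IT_def Kset_def by auto
  ultimately show ?thesis by auto
qed

lemma card3: assumes "a \<noteq> b" "a \<noteq> c" "b \<noteq> c"
  shows "card (A \<inter> {a, b, c}) = of_bool (a \<in> A) + of_bool (b \<in> A) + of_bool (c \<in> A)"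
  using assms by (cases "a \<in> A"; cases "b \<in> A"; cases "c \<in> A") (auto simp: Int_insert_right)

lemma kk_eq: assumes j: "j \<ge> 1"
  shows "kk A j = of_bool (j - 1 \<in> A) + of_bool (j \<in> A) + of_bool (j + 1 \<in> A)"
proof -
  have "{i\<in>A. adj i j} = A \<inter> {j - 1, j, j + 1}" using j by (auto simp: adj_def)
  then show ?thesis unfolding kk_def using card3[of "j - 1" j "j + 1" A] j by simp
qed

lemma parity3: "even (of_bool a + of_bool b + of_bool c :: nat) \<Longrightarrow> (c \<longleftrightarrow> (a \<noteq> b))"
  by (cases a; cases b; cases c) auto

lemma K_cases: assumes A: "A \<in> Kset" shows "A = {} \<or> A = Xs"
proof -
  have AR: "A \<subseteq> R" and ev: "\<forall>j\<in>R. even (kk A j)" using A unfolding Kset_def by auto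
  have claim: "1 \<le> i \<longrightarrow> i < n \<longrightarrow> (i \<in> A \<longleftrightarrow> (1 \<in> A \<and> i mod 3 \<noteq> 0))" for i
  proof (induction i rule: less_induct)
    case (less i)
    show ?case
    proof (intro impI)
      assume i1: "1 \<le> i" and in_: "i < n"
      consider "i = 1" | "i = 2" | "i \<ge> 3" using i1 by linarith
      then show "i \<in> A \<longleftrightarrow> (1 \<in> A \<and> i mod 3 \<noteq> 0)"
      proof cases
        case 1 then show ?thesis by simp
      next
        case 2
        have "even (kk A 1)" using ev in_ 2 by auto
        moreover have "0 \<notin> A" using AR by auto
        ultimately show ?thesis using kk_eq[of 1 A] 2
          by (cases "1 \<in> A"; cases "2 \<in> A") (auto simp: numeral_2_eq_2)
      next
        case 3
        have "i - 1 \<in> R" using in_ 3 by auto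
        then have e: "even (kk A (i - 1))" using ev by blast
        have k: "kk A (i - 1) = of_bool (i - 2 \<in> A) + of_bool (i - 1 \<in> A) + of_bool (i \<in> A)"
          using kk_eq[of "i - 1" A] 3 by (simp add: numeral_2_eq_2)
        have h1: "i - 1 \<in> A \<longleftrightarrow> (1 \<in> A \<and> (i - 1) mod 3 \<noteq> 0)" using less[of "i - 1"] 3 in_ by auto
        have h2: "i - 2 \<in> A \<longleftrightarrow> (1 \<in> A \<and> (i - 2) mod 3 \<noteq> 0)" using less[of "i - 2"] 3 in_ by auto
        have m: "(i mod 3 = 0 \<and> (i - 1) mod 3 = 2 \<and> (i - 2) mod 3 = 1) \<or>
                 (i mod 3 = 1 \<and> (i - 1) mod 3 = 0 \<and> (i - 2) mod 3 = 2) \<or>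
                 (i mod 3 = 2 \<and> (i - 1) mod 3 = 1 \<and> (i - 2) mod 3 = 0)"
        proof -
          have a: "(i - 1) mod 3 = (i mod 3 + 2) mod 3"
          proof -
            have "(i - 1) mod 3 = ((i - 1) + 3) mod 3" by simp
            also have "(i - 1) + 3 = i + 2" using 3 by simp
            also have "(i + 2) mod 3 = (i mod 3 + 2) mod 3" by (rule mod_add_left_eq[symmetric])
            finally show ?thesis .
          qed
          have b: "(i - 2) mod 3 = (i mod 3 + 1) mod 3"
          proof -
            have "(i - 2) mod 3 = ((i - 2) + 3) mod 3" by simp
            also have "(i - 2) + 3 = i + 1" using 3 by simp
            also have "(i + 1) mod 3 = (i mod 3 + 1) mod 3" by (rule mod_add_left_eq[symmetric])
            finally show ?thesis .
          qed
          have "i mod 3 = 0 \<or> i mod 3 = 1 \<or> i mod 3 = 2" by linarith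
          then show ?thesis unfolding a b by (elim disjE) simp_all
        qed
        have par: "i \<in> A \<longleftrightarrow> ((i - 1 \<in> A) \<noteq> (i - 2 \<in> A))"
        proof -
          have ev3: "even (of_bool (i - 2 \<in> A) + of_bool (i - 1 \<in> A) + of_bool (i \<in> A) :: nat)"
            using e unfolding k .
          show ?thesis using parity3[OF ev3] by blast
        qed
        show ?thesis using m
        proof (elim disjE conjE)
          assume "i mod 3 = 0" "(i - 1) mod 3 = 2" "(i - 2) mod 3 = 1"
          then show ?thesis using par h1 h2 by simp
        next
          assume "i mod 3 = 1" "(i - 1) mod 3 = 0" "(i - 2) mod 3 = 2"
          then show ?thesis using par h1 h2 by simp
        next
          assume "i mod 3 = 2" "(i - 1) mod 3 = 1" "(i - 2) mod 3 = 0"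
          then show ?thesis using par h1 h2 by simp
        qed
      qed
    qed
  qed
  show ?thesis
  proof (cases "1 \<in> A")
    case True
    have "A = Xs" unfolding Xs_def using claim AR True by auto
    then show ?thesis by simp
  next
    case False
    have "A = {}" using claim AR False by force
    then show ?thesis by simp
  qed
qed

end


context QS2 begin

lemma phi_pow: "\<phi> (x ^ k) = \<phi> x ^ k"
  by (induction k) simp_all

lemma idem_gen:
  assumes w11: "w1 * w1 = 1" and c: "w1 * w2 = w2 * w1" and a: "a * a = 1" and b: "b * b = 1"
  shows "w1 * (\<phi> (1/4) * ((1 + \<phi> a * w1) * (1 + \<phi> b * w2))) = \<phi> a * (\<phi> (1/4) * ((1 + \<phi> a * w1) * (1 + \<phi> b * w2)))"
    and "w2 * w2 = 1 \<Longrightarrow> w2 * (\<phi> (1/4) * ((1 + \<phi> a * w1) * (1 + \<phi> b * w2))) = \<phi> b * (\<phi> (1/4) * ((1 + \<phi> a * w1) * (1 + \<phi> b * w2)))"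
proof -
  let ?X = "1 + \<phi> a * w1" and ?Y = "1 + \<phi> b * w2"
  have aa: "\<phi> a * \<phi> a = 1" using a by (simp only: phi_mult[symmetric]) simp
  have bb: "\<phi> b * \<phi> b = 1" using b by (simp only: phi_mult[symmetric]) simp
  have wX: "w1 * ?X = \<phi> a * ?X"
  proof -
    have "w1 * ?X = w1 + \<phi> a * (w1 * w1)" by (simp add: distrib_left phi_left)
    also have "\<dots> = \<phi> a * ?X" using w11 aa by (simp add: distrib_left mult.assoc[symmetric] add.commute)
    finally show ?thesis .
  qed
  show "w1 * (\<phi> (1/4) * (?X * ?Y)) = \<phi> a * (\<phi> (1/4) * (?X * ?Y))"
  proof -
    have "w1 * (\<phi> (1/4) * (?X * ?Y)) = \<phi> (1/4) * ((w1 * ?X) * ?Y)" by (simp only: phi_left mult.assoc)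
    also have "\<dots> = \<phi> (1/4) * (\<phi> a * (?X * ?Y))" by (simp only: wX mult.assoc)
    also have "\<dots> = \<phi> a * (\<phi> (1/4) * (?X * ?Y))" by (rule phi_left)
    finally show ?thesis .
  qed
  assume w22: "w2 * w2 = 1"
  have wY: "w2 * ?Y = \<phi> b * ?Y"
  proof -
    have "w2 * ?Y = w2 + \<phi> b * (w2 * w2)" by (simp add: distrib_left phi_left)
    also have "\<dots> = \<phi> b * ?Y" using w22 bb by (simp add: distrib_left mult.assoc[symmetric] add.commute)
    finally show ?thesis .
  qed
  have w2X: "w2 * ?X = ?X * w2"
  proof -
    have "w2 * ?X = w2 + \<phi> a * (w2 * w1)" by (simp add: distrib_left phi_left)
    also have "\<dots> = ?X * w2" by (simp add: distrib_right c mult.assoc)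
    finally show ?thesis .
  qed
  have "w2 * (\<phi> (1/4) * (?X * ?Y)) = \<phi> (1/4) * ((w2 * ?X) * ?Y)" by (simp only: phi_left mult.assoc)
  also have "\<dots> = \<phi> (1/4) * (?X * (\<phi> b * ?Y))" by (simp only: w2X wY mult.assoc)
  also have "\<dots> = \<phi> b * (\<phi> (1/4) * (?X * ?Y))"
    by (simp only: phi_left[of ?X b ?Y] phi_left[of "\<phi> (1/4)" b "?X * ?Y"])
  finally show "w2 * (\<phi> (1/4) * (?X * ?Y)) = \<phi> b * (\<phi> (1/4) * (?X * ?Y))" .
qed

lemma sum4:
  "(\<Sum>j\<in>{1,-1}\<times>{1,-1}. \<phi> (1/4) * ((1 + \<phi> (fst j) * w1) * (1 + \<phi> (snd j) * w2))) = 1"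
proof -
  have "{1,-1}\<times>{1,-1} = {(1::complex,1::complex),(1,-1),(-1,1),(-1,-1)}" by auto
  then have "(\<Sum>j\<in>{1,-1}\<times>{1,-1}. \<phi> (1/4) * ((1 + \<phi> (fst j) * w1) * (1 + \<phi> (snd j) * w2)))
     = \<phi> (1/4) * ((1 + w1) * (1 + w2)) + \<phi> (1/4) * ((1 + w1) * (1 - w2)) + \<phi> (1/4) * ((1 - w1) * (1 + w2)) + \<phi> (1/4) * ((1 - w1) * (1 - w2))"
    by (simp add: add.assoc)
  also have "\<dots> = \<phi> (1/4) + (\<phi> (1/4) + (\<phi> (1/4) + \<phi> (1/4)))"
    by (simp add: algebra_simps)
  also have "\<dots> = \<phi> (1/4 + (1/4 + (1/4 + 1/4)))" by (simp only: phi_add)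
  also have "\<dots> = 1" by simp
  finally show ?thesis .
qed

lemma eig_gen:
  assumes "Ua * E = \<phi> x * E" and "Va * E = \<phi> y * E"
  shows "(\<phi> c0 * 1 + \<phi> c1 * Ua + \<phi> c2 * Va + \<phi> c3 * (Ua * Va)) * E = \<phi> (c0 + c1 * x + c2 * y + c3 * (x * y)) * E"
proof -
  have "Ua * Va * E = \<phi> (x * y) * E"
  proof -
    have "Ua * Va * E = Ua * (\<phi> y * E)" by (simp only: mult.assoc assms(2))
    also have "\<dots> = \<phi> y * (\<phi> x * E)" by (simp only: phi_left[of Ua y E] assms(1))
    also have "\<dots> = \<phi> (x * y) * E" by (simp only: phi_mult[symmetric] mult.assoc[symmetric] mult.commute[of y x])
    finally show ?thesis .
  qed
  note uv = this
  have "(\<phi> c0 * 1 + \<phi> c1 * Ua + \<phi> c2 * Va + \<phi> c3 * (Ua * Va)) * E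
      = \<phi> c0 * E + \<phi> c1 * (Ua * E) + \<phi> c2 * (Va * E) + \<phi> c3 * (Ua * Va * E)"
    by (simp only: distrib_right mult.assoc mult_1_left)
  also have "\<dots> = \<phi> c0 * E + \<phi> c1 * (\<phi> x * E) + \<phi> c2 * (\<phi> y * E) + \<phi> c3 * (\<phi> (x * y) * E)"
    by (simp only: assms uv)
  also have "\<dots> = \<phi> (c0 + c1 * x + c2 * y + c3 * (x * y)) * E"
    by (simp only: mult.assoc[symmetric] phi_mult[symmetric] distrib_right[symmetric] phi_add[symmetric])
  finally show ?thesis .
qed

end

context QS2 begin

lemma family: "\<exists>(J :: (complex \<times> complex) set) e. finite J \<and> (\<Sum>j\<in>J. e j) = 1 \<and> (\<forall>j\<in>J. eig (e j))"
proof (cases "Xs \<in> Kset \<and> Xs \<noteq> {}")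
  case False
  have emp: "{} \<in> Kset" unfolding Kset_def by (simp add: kk_def)
  have K: "Kset = {{}}" using K_cases False emp by blast
  have "eig 1" unfolding eig_def
  proof
    fix z assume z: "z \<in> Zs"
    obtain c where "z = (\<Sum>p\<in>Kset \<times> Kset. \<phi> (c p) * mon p)" using Zs_repr[OF z] by blast
    then have "z * 1 = \<phi> (c ({}, {})) * 1" using K by (simp add: mon_def)
    then show "\<exists>c. z * 1 = \<phi> c * 1" by blast
  qed
  then show ?thesis by (intro exI[of _ "{(1,1)}"] exI[of _ "\<lambda>_. 1"]) simp
next
  case True
  have emp: "{} \<in> Kset" unfolding Kset_def by (simp add: kk_def)
  have K: "Kset = {{}, Xs}" using K_cases True emp by blast
  have XR: "Xs \<subseteq> R" and fX: "finite Xs" unfolding Xs_def by auto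
  have evX: "\<forall>j\<in>R. even (kk Xs j)" using True unfolding Kset_def by auto
  define l :: complex where "l = (if even (card Xs) then 1 else \<i>)"
  have l0: "l \<noteq> 0" by (simp add: l_def)
  have ll: "l * l * (-1) ^ card Xs = 1" by (simp add: l_def minus_one_power_iff)
  define w1 where "w1 = \<phi> l * U Xs"
  define w2 where "w2 = \<phi> l * V Xs"
  have UV: "U Xs * V Xs = V Xs * U Xs"
  proof -
    have "\<forall>j\<in>Xs. U Xs * v j = v j * U Xs"
    proof
      fix j assume j: "j \<in> Xs"
      then have jR: "j \<in> R" using XR by auto
      show "U Xs * v j = v j * U Xs" using v_U[OF jR fX XR] evX jR by simp
    qed
    then show ?thesis using V_comm_gen[OF fX XR] by blast
  qed
  have sq: "\<phi> l * X * (\<phi> l * X) = 1" if "X * X = (-1) ^ card Xs" for X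
  proof -
    have "\<phi> l * X * (\<phi> l * X) = \<phi> l * (\<phi> l * (X * X))" by (simp only: mult.assoc phi_left[of X l X])
    also have "\<dots> = \<phi> (l * l * (-1) ^ card Xs)" using that by (simp add: phi_pow mult.assoc)
    finally show ?thesis using ll by simp
  qed
  have w11: "w1 * w1 = 1" unfolding w1_def by (rule sq[OF UU[OF fX XR]])
  have w22: "w2 * w2 = 1" unfolding w2_def by (rule sq[OF VV[OF fX XR]])
  have c12: "w1 * w2 = w2 * w1"
  proof -
    have "w1 * w2 = \<phi> l * (\<phi> l * (U Xs * V Xs))" unfolding w1_def w2_def by (simp only: mult.assoc phi_left[of "U Xs" l "V Xs"])
    also have "\<dots> = w2 * w1" unfolding w1_def w2_def UV by (simp only: mult.assoc phi_left[of "V Xs" l "U Xs"])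
    finally show ?thesis .
  qed
  have Uw: "U Xs = \<phi> (1/l) * w1" unfolding w1_def using phi_inv_cancel[OF l0] by (simp add: mult.assoc[symmetric])
  have Vw: "V Xs = \<phi> (1/l) * w2" unfolding w2_def using phi_inv_cancel[OF l0] by (simp add: mult.assoc[symmetric])
  define J :: "(complex \<times> complex) set" where "J = {1,-1}\<times>{1,-1}"
  define e where "e j = \<phi> (1/4) * ((1 + \<phi> (fst j) * w1) * (1 + \<phi> (snd j) * w2))" for j :: "complex \<times> complex"
  have "eig (e j)" if j: "j \<in> J" for j
    unfolding eig_def
  proof
    fix z assume z: "z \<in> Zs"
    have a: "fst j * fst j = 1" and b: "snd j * snd j = 1" using j unfolding J_def by auto
    have E1: "w1 * e j = \<phi> (fst j) * e j" unfolding e_def by (rule idem_gen(1)[OF w11 c12 a b])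
    have E2: "w2 * e j = \<phi> (snd j) * e j" unfolding e_def by (rule idem_gen(2)[OF w11 c12 a b w22])
    have UE: "U Xs * e j = \<phi> (1/l * fst j) * e j" unfolding Uw
      by (simp only: mult.assoc E1) (simp only: phi_mult mult.assoc)
    have VE: "V Xs * e j = \<phi> (1/l * snd j) * e j" unfolding Vw
      by (simp only: mult.assoc E2) (simp only: phi_mult mult.assoc)
    obtain c where zc: "z = (\<Sum>p\<in>Kset \<times> Kset. \<phi> (c p) * mon p)" using Zs_repr[OF z] by blast
    have "z = \<phi> (c ({},{})) * 1 + \<phi> (c (Xs,{})) * U Xs + \<phi> (c ({},Xs)) * V Xs + \<phi> (c (Xs,Xs)) * (U Xs * V Xs)"
    proof -
      have "Kset \<times> Kset = {({},{}), (Xs,{}), ({},Xs), (Xs,Xs)}" using K by auto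
      moreover have ne: "Xs \<noteq> {}" "{} \<noteq> Xs" using True by auto
      ultimately show ?thesis using zc by (simp add: mon_def add.assoc)
    qed
    then have "z * e j = \<phi> (c ({},{}) + c (Xs,{}) * (1/l * fst j) + c ({},Xs) * (1/l * snd j) + c (Xs,Xs) * ((1/l * fst j) * (1/l * snd j))) * e j"
      using eig_gen[OF UE VE] by simp
    then show "\<exists>c. z * e j = \<phi> c * e j" by blast
  qed
  moreover have "(\<Sum>j\<in>J. e j) = 1" unfolding J_def e_def by (rule sum4)
  moreover have "finite J" unfolding J_def by simp
  ultimately show ?thesis by blast
qed

lemma finite_G: "finite G"
  using family finite_G_from_family by blast

end

theorem lemma3p3:
  fixes n :: nat and \<phi> :: "complex \<Rightarrow> 'a::ring_1" and u v :: "nat \<Rightarrow> 'a" and q :: complex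
  assumes "n \<ge> 2"
    and "q = exp (2 * pi * \<i> / 6)"
    and "complex_alg_emb \<phi>"
    and "Q_relations n u v"
  shows "(\<forall>i\<in>{1..<n}. \<exists>t. t * s_elt \<phi> q u v i = 1 \<and> s_elt \<phi> q u v i * t = 1)
         \<and> finite (gen_group (s_elt \<phi> q u v ` {1..<n}))"
proof -
  have q3: "q ^ 3 = -1"
  proof -
    have "q ^ 3 = exp (of_nat 3 * (2 * pi * \<i> / 6))" unfolding assms(2) by (rule exp_of_nat_mult[symmetric])
    also have "of_nat 3 * (2 * pi * \<i> / 6) = pi * \<i>" by simp
    also have "exp (pi * \<i>) = -1" by (rule exp_pi_i)
    finally show ?thesis .
  qed
  interpret Q: QS2 n \<phi> u v q
    by unfold_locales (use assms(3,4) q3 in auto)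
  have sfun: "s_elt \<phi> q u v = Q.s" by (rule ext) (simp add: Q.s_def)
  show ?thesis
  proof
    show "\<forall>i\<in>{1..<n}. \<exists>t. t * s_elt \<phi> q u v i = 1 \<and> s_elt \<phi> q u v i * t = 1"
      unfolding sfun using Q.s_has_inv by blast
    show "finite (gen_group (s_elt \<phi> q u v ` {1..<n}))"
      unfolding sfun by (rule Q.finite_G)
  qed
qed


end
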